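(* Let $n=6k+4$ with $k\geq 1$ an integer, and let $\mathcal{V}_n$ be the latin square defined below. Then $\mathcal{V}_n$ has a transversal, and every suitable diagonal of $\mathcal{V}_n$ contains the $k$ entries $$(1,0,3)\ \text{and}\ (3j+2,\ n-6j,\ n-3j+3)\ \text{for } j=1,\dots,k-1,$$ i.e. the entries $(1,0,3),(5,n-6,0),(8,n-12,n-3),(11,n-18,n-6),\ldots,(3k-1,10,3k+10)$ (all coordinates read modulo $n$).
   Context: Rows, columns and symbols are indexed by $\mathbb{Z}_n=\{0,1,\dots,n-1\}$; all arithmetic on symbols is modulo $n$, and congruence conditions on $a,b$ modulo $2$ or $3$ refer to the representatives in $\{0,\dots,n-1\}$. A latin square is viewed as its set of entries $(r,c,s)$ (symbol $s$ in row $r$, column $c$). For $n=6k+4$, $k\ge1$, the latin square $\mathcal{V}_n$ is defined by $\mathcal{V}_n[a,b]=$ $a+b-1$ if $(a,b)\in\{(1,1),(1,2)\}$; $a+b-2$ if $(a,b)\in\{(3,0),(3,2)\}$; $a+b+1$ if $(a,b)=(0,1)$; $a+b+2$ if $(a,b)=(1,0)$; $a+b+3$ if $b\equiv2\pmod3$ and $a=0$; $a+b-3$ if $b>2$, $b\equiv 2\pmod 3$ and $a=3$; $a+b-2$ if $4\le a\le 3k$, $a\equiv 0\pmod3$ and $b\equiv0\pmod2$; $a+b+2$ if $4\le a\le 3k$, $a\equiv1\pmod3$, $b\equiv0\pmod2$ and $b\ne n-2a+2$; $a+b+1$ if $4\le a\le 3k$, $a\equiv1\pmod 3$ and $b\in\{n-2a+2,n-2a+3\}$;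 $a+b+1$ if $4\le a\le 3k$, $a\equiv2\pmod3$ and $b=n-2a+4$; $a+b-1$ if $4\le a\le 3k$, $a\equiv 2\pmod 3$ and $b=n-2a+5$; $a+b$ otherwise. A transversal is a set of $n$ entries containing each row, column and symbol exactly once. For an entry $(r,c,s)$, $\Delta(r,c,s)$ is the unique integer with $\Delta(r,c,s)\equiv s-r-c\pmod n$ and $-n/2<\Delta(r,c,s)\le n/2$. A suitable diagonal is a set of $n$ entries, no two sharing a row or a column, whose $\Delta$-values sum to something congruent to $n/2$ modulo $n$. *)

theory Defs
  imports "HOL-Number_Theory.Number_Theory"
begin

type_synonym entry = "nat \<times> nat \<times> nat"

definition V :: "nat \<Rightarrow> nat \<Rightarrow> nat \<Rightarrow> nat" where
  "V k a b = (let n = 6*k+4; ai = int a; bi = int b; ni = int n;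
     off :: int =
      (if (a,b) \<in> {(1,1),(1,2)} then -1
       else if (a,b) \<in> {(3,0),(3,2)} then -2
       else if (a,b) = (0,1) then 1
       else if (a,b) = (1,0) then 2
       else if b mod 3 = 2 \<and> a = 0 then 3
       else if b > 2 \<and> b mod 3 = 2 \<and> a = 3 then -3
       else if 4 \<le> a \<and> a \<le> 3*k \<and> a mod 3 = 0 \<and> b mod 2 = 0 then -2
       else if 4 \<le> a \<and> a \<le> 3*k \<and> a mod 3 = 1 \<and> b mod 2 = 0 \<and> bi \<noteq> ni - 2*ai + 2 then 2
       else if 4 \<le> a \<and> a \<le> 3*k \<and> a mod 3 = 1 \<and> (bi = ni - 2*ai + 2 \<or> bi = ni - 2*ai + 3) then 1
       else if 4 \<le> a \<and> a \<le> 3*k \<and> a mod 3 = 2 \<and> bi = ni - 2*ai + 4 then 1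
       else if 4 \<le> a \<and> a \<le> 3*k \<and> a mod 3 = 2 \<and> bi = ni - 2*ai + 5 then -1
       else 0)
   in nat ((ai + bi + off) mod ni))"

definition entries :: "nat \<Rightarrow> entry set" where
  "entries k = {(r, c, V k r c) | r c. r < 6*k+4 \<and> c < 6*k+4}"

definition is_transversal :: "nat \<Rightarrow> entry set \<Rightarrow> bool" where
  "is_transversal k T \<longleftrightarrow> (let n = 6*k+4 in
     T \<subseteq> entries k \<and> finite T \<and> card T = n \<and>
     (\<forall>r<n. \<exists>!e\<in>T. fst e = r) \<and>
     (\<forall>c<n. \<exists>!e\<in>T. fst (snd e) = c) \<and>
     (\<forall>s<n. \<exists>!e\<in>T. snd (snd e) = s))"

definition Delta :: "nat \<Rightarrow> entry \<Rightarrow> int" where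
  "Delta n e = (case e of (r, c, s) \<Rightarrow>
     (THE d::int. [d = int s - int r - int c] (mod int n) \<and> - int n < 2*d \<and> 2*d \<le> int n))"

definition is_suitable_diagonal :: "nat \<Rightarrow> entry set \<Rightarrow> bool" where
  "is_suitable_diagonal k D \<longleftrightarrow> (let n = 6*k+4 in
     D \<subseteq> entries k \<and> finite D \<and> card D = n \<and>
     (\<forall>e\<in>D. \<forall>e'\<in>D. e \<noteq> e' \<longrightarrow> fst e \<noteq> fst e' \<and> fst (snd e) \<noteq> fst (snd e')) \<and>
     [(\<Sum>e\<in>D. Delta n e) = int (n div 2)] (mod int n))"

end

theory Submission imports Defs begin

definition offv :: "nat \<Rightarrow> nat \<Rightarrow> nat \<Rightarrow> int" where
  "offv k a b = (let n = 6*k+4; ai = int a; bi = int b; ni = int n in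
      (if (a,b) \<in> {(1,1),(1,2)} then -1
       else if (a,b) \<in> {(3,0),(3,2)} then -2
       else if (a,b) = (0,1) then 1
       else if (a,b) = (1,0) then 2
       else if b mod 3 = 2 \<and> a = 0 then 3
       else if b > 2 \<and> b mod 3 = 2 \<and> a = 3 then -3
       else if 4 \<le> a \<and> a \<le> 3*k \<and> a mod 3 = 0 \<and> b mod 2 = 0 then -2
       else if 4 \<le> a \<and> a \<le> 3*k \<and> a mod 3 = 1 \<and> b mod 2 = 0 \<and> bi \<noteq> ni - 2*ai + 2 then 2
       else if 4 \<le> a \<and> a \<le> 3*k \<and> a mod 3 = 1 \<and> (bi = ni - 2*ai + 2 \<or> bi = ni - 2*ai + 3) then 1
       else if 4 \<le> a \<and> a \<le> 3*k \<and> a mod 3 = 2 \<and> bi = ni - 2*ai + 4 then 1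
       else if 4 \<le> a \<and> a \<le> 3*k \<and> a mod 3 = 2 \<and> bi = ni - 2*ai + 5 then -1
       else 0))"

lemma V_off: "V k a b = nat ((int a + int b + offv k a b) mod int (6*k+4))"
  unfolding V_def offv_def Let_def by (rule refl)

lemma V_lt: "V k a b < 6*k+4"
  unfolding V_off by (simp add: nat_less_iff)

lemma offF: "3*k < a \<Longrightarrow> a \<noteq> 0 \<Longrightarrow> a \<noteq> 1 \<Longrightarrow> a \<noteq> 3 \<Longrightarrow> offv k a b = 0"
  unfolding offv_def Let_def by auto

lemma off0: "offv k 0 b = (if b = 1 then 1 else if b mod 3 = 2 then 3 else 0)"
  unfolding offv_def Let_def by auto
lemma off1: "offv k 1 b = (if b = 1 \<or> b = 2 then -1 else if b = 0 then 2 else 0)"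
  unfolding offv_def Let_def by auto
lemma off2: "offv k 2 b = 0"
  unfolding offv_def Let_def by auto
lemma off3: "offv k 3 b = (if b = 0 \<or> b = 2 then -2 else if b > 2 \<and> b mod 3 = 2 then -3 else 0)"
  unfolding offv_def Let_def by auto
lemma offA0: "4 \<le> a \<Longrightarrow> a \<le> 3*k \<Longrightarrow> a mod 3 = 0 \<Longrightarrow> offv k a b = (if b mod 2 = 0 then -2 else 0)"
  unfolding offv_def Let_def by auto
lemma offA1: "4 \<le> a \<Longrightarrow> a \<le> 3*k \<Longrightarrow> a mod 3 = 1 \<Longrightarrow> offv k a b =
   (if b mod 2 = 0 \<and> int b \<noteq> int (6*k+4) - 2*int a + 2 then 2
    else if int b = int (6*k+4) - 2*int a + 2 \<or> int b = int (6*k+4) - 2*int a + 3 then 1 else 0)"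
  unfolding offv_def Let_def by auto
lemma offA2: "4 \<le> a \<Longrightarrow> a \<le> 3*k \<Longrightarrow> a mod 3 = 2 \<Longrightarrow> offv k a b =
   (if int b = int (6*k+4) - 2*int a + 4 then 1
    else if int b = int (6*k+4) - 2*int a + 5 then -1 else 0)"
  unfolding offv_def Let_def by auto


definition Mx :: "nat \<Rightarrow> nat \<Rightarrow> int" where
  "Mx k r = (if r = 0 then 3 else if r = 1 then 2 else if 4 \<le> r \<and> r \<le> 3*k then
      (if r mod 3 = 1 then 2 else if r mod 3 = 2 then 1 else 0) else 0)"
definition Mn :: "nat \<Rightarrow> nat \<Rightarrow> int" where
  "Mn k r = (if r = 1 then -1 else if r = 3 then -3 else if 4 \<le> r \<and> r \<le> 3*k then
      (if r mod 3 = 0 then -2 else if r mod 3 = 2 then -1 else 0) else 0)"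

lemma off_le: "offv k r b \<le> Mx k r"
proof -
  consider "r = 0" | "r = 1" | "r = 2" | "r = 3" | "4 \<le> r \<and> r \<le> 3*k" | "r \<ge> 4 \<and> 3*k < r" by linarith
  then show ?thesis
  proof cases
    case 5
    then have "r mod 3 = 0 \<or> r mod 3 = 1 \<or> r mod 3 = 2" by linarith
    then show ?thesis using 5 by (auto simp: Mx_def offA0 offA1 offA2)
  next
    case 6 then show ?thesis by (auto simp: Mx_def offF)
  next
    case 2 then show ?thesis using off1[of k b] by (simp add: Mx_def)
  qed (simp_all add: Mx_def off0 off2 off3)
qed

lemma off_ge: "Mn k r \<le> offv k r b"
proof -
  consider "r = 0" | "r = 1" | "r = 2" | "r = 3" | "4 \<le> r \<and> r \<le> 3*k" | "r \<ge> 4 \<and> 3*k < r" by linarith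
  then show ?thesis
  proof cases
    case 5
    then have "r mod 3 = 0 \<or> r mod 3 = 1 \<or> r mod 3 = 2" by linarith
    then show ?thesis using 5 by (auto simp: Mn_def offA0 offA1 offA2)
  next
    case 6 then show ?thesis by (auto simp: Mn_def offF)
  next
    case 2 then show ?thesis using off1[of k b] by (simp add: Mn_def)
  qed (simp_all add: Mn_def off0 off2 off3)
qed

definition Gx :: "nat \<Rightarrow> int" where
  "Gx r = (if r = 0 then 3 else if r = 1 then 2 else if 4 \<le> r then
      (if r mod 3 = 1 then 2 else if r mod 3 = 2 then 1 else 0) else 0)"
definition Gn :: "nat \<Rightarrow> int" where
  "Gn r = (if r = 1 then -1 else if r = 3 then -3 else if 4 \<le> r then
      (if r mod 3 = 0 then -2 else if r mod 3 = 2 then -1 else 0) else 0)"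

lemma sumGx: "k \<ge> 1 \<Longrightarrow> (\<Sum>r<3*k+1. Gx r) = 3*int k+2"
proof (induction k)
  case 0 then show ?case by simp
next
  case (Suc k)
  show ?case
  proof (cases "k = 0")
    case True then show ?thesis by (simp add: Gx_def numeral_eq_Suc)
  next
    case False
    then have IH: "(\<Sum>r<3*k+1. Gx r) = 3*int k+2" using Suc by simp
    have e: "3 * Suc k + 1 = Suc (Suc (Suc (3*k+1)))" by simp
    have "(3*k+1) mod 3 = 1" "(3*k+2) mod 3 = 2" "(3*k+3) mod 3 = 0" by presburger+
    then show ?thesis unfolding e using False IH by (simp add: Gx_def)
  qed
qed

lemma sumGn: "k \<ge> 1 \<Longrightarrow> (\<Sum>r<3*k+1. Gn r) = -3*int k-1"
proof (induction k)
  case 0 then show ?case by simp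
next
  case (Suc k)
  show ?case
  proof (cases "k = 0")
    case True then show ?thesis by (simp add: Gn_def numeral_eq_Suc)
  next
    case False
    then have IH: "(\<Sum>r<3*k+1. Gn r) = -3*int k-1" using Suc by simp
    have e: "3 * Suc k + 1 = Suc (Suc (Suc (3*k+1)))" by simp
    have "(3*k+1) mod 3 = 1" "(3*k+2) mod 3 = 2" "(3*k+3) mod 3 = 0" by presburger+
    then show ?thesis unfolding e using False IH by (simp add: Gn_def)
  qed
qed

lemma sum_restrict:
  fixes m N :: nat
  assumes "m \<le> N" "\<forall>r. m \<le> r \<longrightarrow> f r = 0" shows "(\<Sum>r<N. f r) = (\<Sum>r<m. (f r :: int))"
proof (rule sum.mono_neutral_right)
  show "\<forall>i\<in>{..<N} - {..<m}. f i = 0" using assms(2) by auto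
qed (use assms in auto)

lemma sumMx: "k \<ge> 1 \<Longrightarrow> (\<Sum>r<6*k+4. Mx k r) = 3*int k+2"
proof -
  assume k: "k \<ge> 1"
  have "(\<Sum>r<6*k+4. Mx k r) = (\<Sum>r<3*k+1. Mx k r)"
    by (rule sum_restrict) (use k in \<open>auto simp: Mx_def\<close>)
  also have "\<dots> = (\<Sum>r<3*k+1. Gx r)"
    by (rule sum.cong) (auto simp: Mx_def Gx_def)
  finally show ?thesis using sumGx k by simp
qed

lemma sumMn: "k \<ge> 1 \<Longrightarrow> (\<Sum>r<6*k+4. Mn k r) = -3*int k-1"
proof -
  assume k: "k \<ge> 1"
  have "(\<Sum>r<6*k+4. Mn k r) = (\<Sum>r<3*k+1. Mn k r)"
    by (rule sum_restrict) (use k in \<open>auto simp: Mn_def\<close>)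
  also have "\<dots> = (\<Sum>r<3*k+1. Gn r)"
    by (rule sum.cong) (auto simp: Mn_def Gn_def)
  finally show ?thesis using sumGn k by simp
qed

lemma Delta_V: assumes "k \<ge> 1" shows "Delta (6*k+4) (r, c, V k r c) = offv k r c"
proof -
  let ?n = "int (6*k+4)"
  let ?o = "offv k r c"
  have sv: "int (V k r c) = (int r + int c + ?o) mod ?n"
    unfolding V_off by simp
  have ob: "Mn k r \<le> ?o" "?o \<le> Mx k r" using off_ge off_le by auto
  have "-3 \<le> Mn k r" "Mx k r \<le> 3" unfolding Mn_def Mx_def by auto
  then have ob2: "-3 \<le> ?o" "?o \<le> 3" using ob by linarith+
  have h1: "[int (V k r c) = int r + int c + ?o] (mod ?n)" unfolding sv cong_def by simp
  have h2: "[int (V k r c) - int r - int c = int r + int c + ?o - int r - int c] (mod ?n)"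
    by (intro cong_diff h1 cong_refl)
  then have h3: "[?o = int (V k r c) - int r - int c] (mod ?n)" by (simp add: cong_sym_eq)
  have nb: "- ?n < 2 * ?o \<and> 2 * ?o \<le> ?n" using ob2 assms by linarith
  show ?thesis unfolding Delta_def
  proof (simp only: prod.case, rule the_equality)
    show "[?o = int (V k r c) - int r - int c] (mod ?n) \<and> - ?n < 2 * ?o \<and> 2 * ?o \<le> ?n"
      using h3 nb by blast
  next
    fix d assume d: "[d = int (V k r c) - int r - int c] (mod ?n) \<and> - ?n < 2 * d \<and> 2 * d \<le> ?n"
    have "[d = ?o] (mod ?n)"
      using d h3 by (meson cong_sym cong_trans)
    then have "?n dvd d - ?o" by (simp add: cong_iff_dvd_diff)
    then obtain q where q: "d - ?o = ?n * q" by blast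
    have "q = 0"
    proof (rule ccontr)
      assume "q \<noteq> 0"
      then have "q \<ge> 1 \<or> q \<le> -1" by linarith
      moreover have "q \<ge> 1 \<Longrightarrow> ?n * q \<ge> ?n" by simp
      moreover have "q \<le> -1 \<Longrightarrow> ?n * q \<le> - ?n"
      proof -
        assume "q \<le> -1"
        then have "?n * q \<le> ?n * (-1)" by (intro mult_left_mono) auto
        then show ?thesis by simp
      qed
      ultimately show False using q d nb by linarith
    qed
    then show "d = ?o" using q by simp
  qed
qed

lemma Vval1: "int a + int b + offv k a b = int x \<Longrightarrow> x < 6*k+4 \<Longrightarrow> V k a b = x"
  unfolding V_off by simp
lemma Vval2: "int a + int b + offv k a b = int x + int (6*k+4) \<Longrightarrow> x < 6*k+4 \<Longrightarrow> V k a b = x"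
  unfolding V_off by simp

lemma diag:
  assumes k: "k \<ge> 1" and D: "is_suitable_diagonal k D"
  shows "(1, 0, 3) \<in> D \<and>
       (\<forall>j\<in>{1..k-1}. (3*j+2, (6*k+4) - 6*j, ((6*k+4) - 3*j + 3) mod (6*k+4)) \<in> D)"
proof -
  define n where "n = 6*k+4"
  have sub: "D \<subseteq> entries k" and fin: "finite D" and cD: "card D = n"
    and dist: "\<forall>e\<in>D. \<forall>e'\<in>D. e \<noteq> e' \<longrightarrow> fst e \<noteq> fst e' \<and> fst (snd e) \<noteq> fst (snd e')"
    and cg: "[(\<Sum>e\<in>D. Delta n e) = int (n div 2)] (mod int n)"
    using D unfolding is_suitable_diagonal_def Let_def n_def by auto
  have ent: "\<And>e. e \<in> D \<Longrightarrow> fst e < n \<and> fst (snd e) < n \<and> e = (fst e, fst (snd e), V k (fst e) (fst (snd e)))"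
    using sub unfolding entries_def n_def by auto
  have inj: "inj_on fst D" using dist by (meson inj_onI)
  have fD: "fst ` D = {..<n}"
  proof (rule card_subset_eq)
    show "fst ` D \<subseteq> {..<n}" using ent by auto
    show "card (fst ` D) = card {..<n}" using card_image[OF inj] cD by simp
  qed simp
  let ?o = "\<lambda>e. offv k (fst e) (fst (snd e))"
  have DS: "(\<Sum>e\<in>D. Delta n e) = (\<Sum>e\<in>D. ?o e)"
  proof (rule sum.cong)
    fix e assume "e \<in> D"
    then have "Delta n e = Delta (6*k+4) (fst e, fst (snd e), V k (fst e) (fst (snd e)))"
      using ent n_def by metis
    then show "Delta n e = ?o e" using Delta_V[OF k] by simp
  qed simp
  have SMx: "(\<Sum>e\<in>D. Mx k (fst e)) = 3*int k+2"
  proof -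
    have "(\<Sum>e\<in>D. Mx k (fst e)) = (\<Sum>r\<in>fst ` D. Mx k r)" using sum.reindex[OF inj, of "Mx k"] by (simp add: o_def)
    also have "\<dots> = 3*int k+2" using fD sumMx[OF k] n_def by simp
    finally show ?thesis .
  qed
  have SMn: "(\<Sum>e\<in>D. Mn k (fst e)) = -3*int k-1"
  proof -
    have "(\<Sum>e\<in>D. Mn k (fst e)) = (\<Sum>r\<in>fst ` D. Mn k r)" using sum.reindex[OF inj, of "Mn k"] by (simp add: o_def)
    also have "\<dots> = -3*int k-1" using fD sumMn[OF k] n_def by simp
    finally show ?thesis .
  qed
  have le: "(\<Sum>e\<in>D. ?o e) \<le> 3*int k+2"
    using sum_mono[of D ?o "\<lambda>e. Mx k (fst e)"] off_le SMx by simp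
  have ge: "(\<Sum>e\<in>D. ?o e) \<ge> -3*int k-1"
    using sum_mono[of D "\<lambda>e. Mn k (fst e)" ?o] off_ge SMn by simp
  have "n div 2 = 3*k+2" unfolding n_def by simp
  then have "[(\<Sum>e\<in>D. ?o e) = 3*int k+2] (mod (6*int k+4))"
    using cg DS n_def by (simp add: add.commute)
  then have "(6*int k+4) dvd ((\<Sum>e\<in>D. ?o e) - (3*int k+2))" by (simp add: cong_iff_dvd_diff)
  then obtain q where q: "(\<Sum>e\<in>D. ?o e) - (3*int k+2) = (6*int k+4) * q" by blast
  have "q = 0"
  proof (rule ccontr)
    assume "q \<noteq> 0"
    then have "q \<ge> 1 \<or> q \<le> -1" by linarith
    moreover have "q \<ge> 1 \<Longrightarrow> (6*int k+4) * q \<ge> 6*int k+4" by simp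
    moreover have "q \<le> -1 \<Longrightarrow> (6*int k+4) * q \<le> -(6*int k+4)"
    proof -
      assume "q \<le> -1"
      then have "(6*int k+4) * q \<le> (6*int k+4) * (-1)" by (intro mult_left_mono) auto
      then show ?thesis by simp
    qed
    ultimately show False using q le ge by linarith
  qed
  then have S: "(\<Sum>e\<in>D. ?o e) = 3*int k+2" using q by simp
  have z: "(\<Sum>e\<in>D. Mx k (fst e) - ?o e) = 0"
    using S SMx by (simp add: sum_subtractf)
  have nn: "\<forall>e\<in>D. 0 \<le> Mx k (fst e) - ?o e" using off_le by simp
  have "\<forall>e\<in>D. Mx k (fst e) - ?o e = 0"
    using sum_nonneg_eq_0_iff[OF fin, of "\<lambda>e. Mx k (fst e) - ?o e"] z nn by blast
  then have eqM: "\<forall>e\<in>D. ?o e = Mx k (fst e)" by simp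
  have row: "\<And>r. r < n \<Longrightarrow> \<exists>c. c < n \<and> (r, c, V k r c) \<in> D \<and> offv k r c = Mx k r"
  proof -
    fix r assume "r < n"
    then have "r \<in> fst ` D" using fD by simp
    then obtain e where e: "e \<in> D" "fst e = r" by blast
    then show "\<exists>c. c < n \<and> (r, c, V k r c) \<in> D \<and> offv k r c = Mx k r"
      using ent[OF e(1)] eqM by (intro exI[of _ "fst (snd e)"]) auto
  qed
  have A: "(1, 0, 3) \<in> D"
  proof -
    obtain c where c: "c < n" "(1, c, V k 1 c) \<in> D" "offv k 1 c = Mx k 1"
      using row[of 1] n_def by auto
    then have "c = 0" using off1[of k c] by (simp add: Mx_def split: if_splits)
    moreover have "V k 1 0 = 3"
    proof (rule Vval1)
      show "int 1 + int 0 + offv k 1 0 = int 3" using off1[of k 0] by simp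
    qed simp
    ultimately show ?thesis using c by simp
  qed
  have B: "(3*j+2, (6*k+4) - 6*j, ((6*k+4) - 3*j + 3) mod (6*k+4)) \<in> D" if j: "j \<in> {1..k-1}" for j
  proof -
    let ?a = "3*j+2"
    have m3: "?a mod 3 = 2" by presburger
    have a: "4 \<le> ?a" "?a \<le> 3*k" "?a mod 3 = 2" "?a < n" using j n_def m3 by auto
    obtain c where c: "c < n" "(?a, c, V k ?a c) \<in> D" "offv k ?a c = Mx k ?a"
      using row[OF a(4)] by auto
    have "Mx k ?a = 1" using a unfolding Mx_def by simp
    then have "int c = int (6*k+4) - 2*int ?a + 4" using c(3) offA2[OF a(1-3), of c]
      by (simp split: if_splits)
    then have cv: "c = (6*k+4) - 6*j" using j by auto
    have "V k ?a c = nat ((int ?a + int c + 1) mod int (6*k+4))"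
      using c(3) \<open>Mx k ?a = 1\<close> by (simp add: V_off)
    also have "int ?a + int c + 1 = int ((6*k+4) - 3*j + 3)" using cv j by auto
    also have "nat (int ((6*k+4) - 3*j + 3) mod int (6*k+4)) = ((6*k+4) - 3*j + 3) mod (6*k+4)"
      by (simp add: of_nat_mod[symmetric] del: of_nat_add)
    finally show ?thesis using c(2) cv by simp
  qed
  show ?thesis using A B by blast
qed


definition col :: "nat \<Rightarrow> nat \<Rightarrow> nat" where
"col k a = (if a = 0 then 2 else if a = 1 then 0 else if a = 2 then 6 else if a = 3 then 1
  else if a \<le> 3*k then (if a mod 3 = 1 then 6*k+6 - 6*(a div 3) else if a mod 3 = 2 then 6*k+4 - 6*(a div 3)
     else 6*k+11 - 6*(a div 3))
  else (let i = (a - (3*k+1)) div 3 in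
     if a mod 3 = 1 then (if i = 0 then 5 else 6*k+9-6*i)
     else if a mod 3 = 2 then (if i = 0 then 7 else if i = 1 then 3 else 6*k+13-6*i)
     else (if i = 0 then 4 else 6*k+8-6*i)))"

lemma col_lt: assumes "k \<ge> 1" "a < 6*k+4" shows "col k a < 6*k+4"
proof -
  have h: "4 \<le> a \<longrightarrow> a mod 3 = 0 \<longrightarrow> 2 \<le> a div 3" by presburger
  show ?thesis using assms h unfolding col_def Let_def by (auto, linarith)
qed

lemma colB1: "1 \<le> j \<Longrightarrow> j+1 \<le> k \<Longrightarrow> col k (3*j+1) = 6*k+6-6*j"
proof -
  assume "1 \<le> j" "j+1 \<le> k"
  moreover have "(3*j+1) mod 3 = 1" "(3*j+1) div 3 = j" by presburger+
  ultimately show ?thesis unfolding col_def by simp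
qed
lemma colB2: "1 \<le> j \<Longrightarrow> j+1 \<le> k \<Longrightarrow> col k (3*j+2) = 6*k+4-6*j"
proof -
  assume "1 \<le> j" "j+1 \<le> k"
  moreover have "(3*j+2) mod 3 = 2" "(3*j+2) div 3 = j" by presburger+
  ultimately show ?thesis unfolding col_def by simp
qed
lemma colB3: "1 \<le> j \<Longrightarrow> j+1 \<le> k \<Longrightarrow> col k (3*j+3) = 6*k+5-6*j"
proof -
  assume "1 \<le> j" "j+1 \<le> k"
  moreover have "(3*j+3) mod 3 = 0" "(3*j+3) div 3 = j+1" by presburger+
  ultimately show ?thesis unfolding col_def by simp
qed
lemma colF0: "k \<ge> 1 \<Longrightarrow> col k (3*k+1+3*i) = (if i = 0 then 5 else 6*k+9-6*i)"
proof -
  assume assms: "k \<ge> 1"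
  have "(3*k+1+3*i) mod 3 = 1" "(3*k+1+3*i - (3*k+1)) div 3 = i" by presburger+
  then show ?thesis using assms unfolding col_def Let_def by simp
qed
lemma colF1: "k \<ge> 1 \<Longrightarrow> col k (3*k+2+3*i) = (if i = 0 then 7 else if i = 1 then 3 else 6*k+13-6*i)"
proof -
  assume assms: "k \<ge> 1"
  have "(3*k+2+3*i) mod 3 = 2" "(3*k+2+3*i - (3*k+1)) div 3 = i" by presburger+
  then show ?thesis using assms unfolding col_def Let_def by simp
qed
lemma colF2: "k \<ge> 1 \<Longrightarrow> col k (3*k+3+3*i) = (if i = 0 then 4 else 6*k+8-6*i)"
proof -
  assume assms: "k \<ge> 1"
  have "(3*k+3+3*i) mod 3 = 0" "(3*k+3+3*i - (3*k+1)) div 3 = i" by presburger+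
  then show ?thesis using assms unfolding col_def Let_def by simp
qed

lemma col_surj:
  assumes k: "k \<ge> 1" and c: "c < 6*k+4" shows "\<exists>a<6*k+4. col k a = c"
proof -
  consider "c = 0" | "c = 1" | "c = 2" | "c = 3" | "c = 4" | "c = 5" | "c = 6" | "c = 7" | "c \<ge> 8" by linarith
  then show ?thesis
  proof cases
    case 1 then show ?thesis by (intro exI[of _ 1]) (simp add: col_def)
  next
    case 2 then show ?thesis by (intro exI[of _ 3]) (simp add: col_def)
  next
    case 3 then show ?thesis by (intro exI[of _ 0]) (simp add: col_def)
  next
    case 4 then show ?thesis using colF1[OF k, of 1] k by (intro exI[of _ "3*k+2+3*1"]) simp
  next
    case 5 then show ?thesis using colF2[OF k, of 0] k by (intro exI[of _ "3*k+3+3*0"]) simp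
  next
    case 6 then show ?thesis using colF0[OF k, of 0] k by (intro exI[of _ "3*k+1+3*0"]) simp
  next
    case 7 then show ?thesis by (intro exI[of _ 2]) (simp add: col_def)
  next
    case 8 then show ?thesis using colF1[OF k, of 0] k by (intro exI[of _ "3*k+2+3*0"]) simp
  next
    case 9
    obtain q r where qr: "c = 6*q + r" "r < 6" by (metis div_mod_decomp mod_less_divisor zero_less_numeral mult.commute)
    then have "r = 0 \<or> r = 1 \<or> r = 2 \<or> r = 3 \<or> r = 4 \<or> r = 5" by linarith
    then show ?thesis
    proof (elim disjE)
      assume "r = 0"
      then have q: "2 \<le> q" "q \<le> k" using qr 9 c by linarith+
      show ?thesis using colB1[of "k+1-q" k] q qr \<open>r = 0\<close>
        by (intro exI[of _ "3*(k+1-q)+1"]) auto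
    next
      assume "r = 1"
      then have q: "2 \<le> q" "q \<le> k" using qr 9 c by linarith+
      show ?thesis using colF1[OF k, of "k+2-q"] q qr \<open>r = 1\<close>
        by (intro exI[of _ "3*k+2+3*(k+2-q)"]) auto
    next
      assume "r = 2"
      then have q: "1 \<le> q" "q \<le> k" using qr 9 c by linarith+
      show ?thesis using colF2[OF k, of "k+1-q"] q qr \<open>r = 2\<close>
        by (intro exI[of _ "3*k+3+3*(k+1-q)"]) auto
    next
      assume "r = 3"
      then have q: "1 \<le> q" "q \<le> k" using qr 9 c by linarith+
      show ?thesis using colF0[OF k, of "k+1-q"] q qr \<open>r = 3\<close>
        by (intro exI[of _ "3*k+1+3*(k+1-q)"]) auto
    next
      assume "r = 4"
      then have q: "1 \<le> q" "q+1 \<le> k" using qr 9 c by linarith+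
      show ?thesis using colB2[of "k-q" k] q qr \<open>r = 4\<close>
        by (intro exI[of _ "3*(k-q)+2"]) auto
    next
      assume "r = 5"
      then have q: "1 \<le> q" "q+1 \<le> k" using qr 9 c by linarith+
      show ?thesis using colB3[of "k-q" k] q qr \<open>r = 5\<close>
        by (intro exI[of _ "3*(k-q)+3"]) auto
    qed
  qed
qed


lemma VB1: assumes "1 \<le> j" "j+1 \<le> k"
  shows "V k (3*j+1) (6*k+6-6*j) = (if j = 1 then 2 else 6*k+9-3*j)"
proof -
  have m: "(3*j+1) mod 3 = 1" by presburger
  have e: "(6*k+6-6*j) mod 2 = 0" by presburger
  have o: "offv k (3*j+1) (6*k+6-6*j) = 2" using offA1[of "3*j+1" k "6*k+6-6*j"] m e assms by auto
  show ?thesis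
  proof (cases "j = 1")
    case True
    have "V k (3*j+1) (6*k+6-6*j) = 2" by (rule Vval2) (use o assms True in auto)
    then show ?thesis using True by simp
  next
    case False
    have "V k (3*j+1) (6*k+6-6*j) = 6*k+9-3*j" by (rule Vval1) (use o assms False in auto)
    then show ?thesis using False by simp
  qed
qed

lemma VB2: assumes "1 \<le> j" "j+1 \<le> k"
  shows "V k (3*j+2) (6*k+4-6*j) = (if j = 1 then 0 else 6*k+7-3*j)"
proof -
  have m: "(3*j+2) mod 3 = 2" by presburger
  have o: "offv k (3*j+2) (6*k+4-6*j) = 1" using offA2[of "3*j+2" k "6*k+4-6*j"] m assms by auto
  show ?thesis
  proof (cases "j = 1")
    case True
    have "V k (3*j+2) (6*k+4-6*j) = 0" by (rule Vval2) (use o assms True in auto)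
    then show ?thesis using True by simp
  next
    case False
    have "V k (3*j+2) (6*k+4-6*j) = 6*k+7-3*j" by (rule Vval1) (use o assms False in auto)
    then show ?thesis using False by simp
  qed
qed

lemma VB3: assumes "1 \<le> j" "j+1 \<le> k"
  shows "V k (3*j+3) (6*k+5-6*j) = (if j = 1 then 1 else 6*k+8-3*j)"
proof -
  have m: "(3*j+3) mod 3 = 0" by presburger
  have e: "(6*k+5-6*j) mod 2 = 1" using assms by presburger
  have o: "offv k (3*j+3) (6*k+5-6*j) = 0" using offA0[of "3*j+3" k "6*k+5-6*j"] m e assms by auto
  show ?thesis
  proof (cases "j = 1")
    case True
    have "V k (3*j+3) (6*k+5-6*j) = 1" by (rule Vval2) (use o assms True in auto)
    then show ?thesis using True by simp
  next
    case False
    have "V k (3*j+3) (6*k+5-6*j) = 6*k+8-3*j" by (rule Vval1) (use o assms False in auto)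
    then show ?thesis using False by simp
  qed
qed

lemma VF0: assumes "k \<ge> 1" "i \<le> k"
  shows "V k (3*k+1+3*i) (col k (3*k+1+3*i)) = 3*k+6-3*i"
proof -
  have o: "offv k (3*k+1+3*i) b = 0" for b using assms by (intro offF) auto
  show ?thesis
  proof (cases "i = 0")
    case True then show ?thesis using colF0[OF assms(1), of i] o assms by (intro Vval1) auto
  next
    case False then show ?thesis using colF0[OF assms(1), of i] o assms by (intro Vval2) auto
  qed
qed

lemma VF1: assumes "k \<ge> 2" "i \<le> k"
  shows "V k (3*k+2+3*i) (col k (3*k+2+3*i)) = (if i = 0 then 3*k+9 else 3*k+11-3*i)"
proof -
  have k: "k \<ge> 1" using assms by simp
  have o: "offv k (3*k+2+3*i) b = 0" for b using assms by (intro offF) auto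
  consider "i = 0" | "i = 1" | "i \<ge> 2" by linarith
  then show ?thesis
  proof cases
    case 1 then show ?thesis using colF1[OF k, of i] o assms by (simp, intro Vval1) auto
  next
    case 2 then show ?thesis using colF1[OF k, of i] o assms by (simp, intro Vval1) auto
  next
    case 3 then show ?thesis using colF1[OF k, of i] o assms by (simp, intro Vval2) auto
  qed
qed

lemma VF2: assumes "k \<ge> 2" "i \<le> k"
  shows "V k (3*k+3+3*i) (col k (3*k+3+3*i)) = 3*k+7-3*i"
proof -
  have k: "k \<ge> 1" using assms by simp
  have o: "offv k (3*k+3+3*i) b = 0" for b using assms by (intro offF) auto
  show ?thesis
  proof (cases "i = 0")
    case True then show ?thesis using colF2[OF k, of i] o assms by (intro Vval1) auto
  next
    case False then show ?thesis using colF2[OF k, of i] o assms by (intro Vval2) auto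
  qed
qed

lemma Vspec: assumes k: "k \<ge> 1" shows "V k 0 (col k 0) = 5" "V k 1 (col k 1) = 3" "V k 2 (col k 2) = 8" "V k 3 (col k 3) = 4"
proof -
  show "V k 0 (col k 0) = 5" by (rule Vval1) (use k in \<open>simp_all add: col_def off0\<close>)
  show "V k 1 (col k 1) = 3" by (rule Vval1) (use k off1[of k 0] in \<open>simp_all add: col_def\<close>)
  show "V k 2 (col k 2) = 8" by (rule Vval1) (use k in \<open>simp_all add: col_def off2\<close>)
  show "V k 3 (col k 3) = 4" by (rule Vval1) (use k in \<open>simp_all add: col_def off3\<close>)
qed


lemma VcB1: "1 \<le> j \<Longrightarrow> j+1 \<le> k \<Longrightarrow> V k (3*j+1) (col k (3*j+1)) = (if j = 1 then 2 else 6*k+9-3*j)"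
  using colB1 VB1 by simp
lemma VcB2: "1 \<le> j \<Longrightarrow> j+1 \<le> k \<Longrightarrow> V k (3*j+2) (col k (3*j+2)) = (if j = 1 then 0 else 6*k+7-3*j)"
  using colB2 VB2 by simp
lemma VcB3: "1 \<le> j \<Longrightarrow> j+1 \<le> k \<Longrightarrow> V k (3*j+3) (col k (3*j+3)) = (if j = 1 then 1 else 6*k+8-3*j)"
  using colB3 VB3 by simp

lemma sym_surj2:
  assumes k: "k \<ge> 2" and s: "s < 6*k+4" shows "\<exists>a<6*k+4. V k a (col k a) = s"
proof -
  have k1: "k \<ge> 1" using k by simp
  consider "s = 0" | "s = 1" | "s = 2" | "s = 3" | "s = 4" | "s = 5" | "s = 8"
    | "s \<notin> {0,1,2,3,4,5,8}" by blast
  then show ?thesis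
  proof cases
    case 1 then show ?thesis using VcB2[of 1 k] k by (intro exI[of _ "3*1+2"]) simp
  next
    case 2 then show ?thesis using VcB3[of 1 k] k by (intro exI[of _ "3*1+3"]) simp
  next
    case 3 then show ?thesis using VcB1[of 1 k] k by (intro exI[of _ "3*1+1"]) simp
  next
    case 4 then show ?thesis using Vspec[OF k1] by (intro exI[of _ 1]) simp
  next
    case 5 then show ?thesis using Vspec[OF k1] by (intro exI[of _ 3]) simp
  next
    case 6 then show ?thesis using Vspec[OF k1] by (intro exI[of _ 0]) simp
  next
    case 7 then show ?thesis using Vspec[OF k1] by (intro exI[of _ 2]) simp
  next
    case 8
    obtain q r where qr: "s = 3*q + r" "r < 3" by (metis div_mod_decomp mod_less_divisor zero_less_numeral mult.commute)
    then have "r = 0 \<or> r = 1 \<or> r = 2" by linarith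
    then show ?thesis
    proof (elim disjE)
      assume r: "r = 0"
      have "(s \<le> 3*k+6) \<or> (s = 3*k+9) \<or> (s \<ge> 3*k+12)" using qr r by presburger
      then consider "s \<le> 3*k+6" | "s = 3*k+9" | "s \<ge> 3*k+12" by blast
      then show ?thesis
      proof cases
        case 1
        then have q: "2 \<le> q" "q \<le> k+2" using qr r 8 by auto
        show ?thesis using VF0[OF k1, of "k+2-q"] q qr r
          by (intro exI[of _ "3*k+1+3*(k+2-q)"]) auto
      next
        case 2
        then show ?thesis using VF1[OF k, of 0] by (intro exI[of _ "3*k+2+3*0"]) auto
      next
        case 3
        then have q: "k+4 \<le> q" "q \<le> 2*k+1" using qr r s by presburger+
        show ?thesis using VcB1[of "2*k+3-q" k] q qr r
          by (intro exI[of _ "3*(2*k+3-q)+1"]) auto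
      qed
    next
      assume r: "r = 1"
      have "(s \<le> 3*k+7) \<or> (s \<ge> 3*k+10)" using qr r by presburger
      then consider "s \<le> 3*k+7" | "s \<ge> 3*k+10" by blast
      then show ?thesis
      proof cases
        case 1
        then have q: "2 \<le> q" "q \<le> k+2" using qr r 8 by auto
        show ?thesis using VF2[OF k, of "k+2-q"] q qr r
          by (intro exI[of _ "3*k+3+3*(k+2-q)"]) auto
      next
        case 2
        then have q: "k+3 \<le> q" "q \<le> 2*k" using qr r s by presburger+
        show ?thesis using VcB2[of "2*k+2-q" k] q qr r
          by (intro exI[of _ "3*(2*k+2-q)+2"]) auto
      qed
    next
      assume r: "r = 2"
      have "(s \<le> 3*k+8) \<or> (s \<ge> 3*k+11)" using qr r by presburger
      then consider "s \<le> 3*k+8" | "s \<ge> 3*k+11" by blast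
      then show ?thesis
      proof cases
        case 1
        then have q: "3 \<le> q" "q \<le> k+2" using qr r 8 by auto
        show ?thesis using VF1[OF k, of "k+3-q"] q qr r
          by (intro exI[of _ "3*k+2+3*(k+3-q)"]) auto
      next
        case 2
        then have q: "k+3 \<le> q" "q \<le> 2*k" using qr r s by presburger+
        show ?thesis using VcB3[of "2*k+2-q" k] q qr r
          by (intro exI[of _ "3*(2*k+2-q)+3"]) auto
      qed
    qed
  qed
qed

lemma sym_surj1: assumes "s < 10" shows "\<exists>a<10. V 1 a (col 1 a) = s"
proof -
  have "s \<in> {0,1,2,3,4,5,6,7,8,9}" using assms by auto
  then show ?thesis
  proof (elim insertE)
    assume "s = 0" then show ?thesis by (intro exI[of _ 6]) (simp add: col_def V_def)
  next
    assume "s = 1" then show ?thesis by (intro exI[of _ 8]) (simp add: col_def V_def)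
  next
    assume "s = 2" then show ?thesis by (intro exI[of _ 5]) (simp add: col_def V_def)
  next
    assume "s = 3" then show ?thesis by (intro exI[of _ 1]) (simp add: col_def V_def)
  next
    assume "s = 4" then show ?thesis by (intro exI[of _ 3]) (simp add: col_def V_def)
  next
    assume "s = 5" then show ?thesis by (intro exI[of _ 0]) (simp add: col_def V_def)
  next
    assume "s = 6" then show ?thesis by (intro exI[of _ 7]) (simp add: col_def V_def)
  next
    assume "s = 7" then show ?thesis by (intro exI[of _ 9]) (simp add: col_def V_def)
  next
    assume "s = 8" then show ?thesis by (intro exI[of _ 2]) (simp add: col_def V_def)
  next
    assume "s = 9" then show ?thesis by (intro exI[of _ 4]) (simp add: col_def V_def)
  qed simp
qed


lemma sym_surj: assumes k: "k \<ge> 1" and s: "s < 6*k+4" shows "\<exists>a<6*k+4. V k a (col k a) = s"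
proof (cases "k = 1")
  case True then show ?thesis using sym_surj1[of s] s by simp
next
  case False then show ?thesis using sym_surj2[of k s] k s by simp
qed

lemma surj_inj:
  fixes f :: "nat \<Rightarrow> nat"
  assumes "\<forall>a<n. f a < n" "\<forall>c<n. \<exists>a<n. f a = c"
  shows "inj_on f {..<n}"
proof -
  have "f ` {..<n} = {..<n}" using assms by force
  then show ?thesis by (intro eq_card_imp_inj_on) auto
qed

lemma trans_ex: assumes k: "k \<ge> 1" shows "\<exists>T. is_transversal k T"
proof -
  define n where "n = 6*k+4"
  define f where "f = (\<lambda>a. (a, col k a, V k a (col k a)))"
  define T where "T = f ` {..<n}"
  have cl: "\<forall>a<n. col k a < n" using col_lt[OF k] n_def by simp
  have cs: "\<forall>c<n. \<exists>a<n. col k a = c" using col_surj[OF k] n_def by simp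
  have vl: "\<forall>a<n. V k a (col k a) < n" using V_lt n_def by simp
  have vs: "\<forall>c<n. \<exists>a<n. V k a (col k a) = c" using sym_surj[OF k] n_def by simp
  have ic: "inj_on (col k) {..<n}" by (rule surj_inj[OF cl cs])
  have iv: "inj_on (\<lambda>a. V k a (col k a)) {..<n}" by (rule surj_inj[OF vl vs])
  have fi: "inj_on f {..<n}" unfolding f_def by (rule inj_onI) simp
  have "is_transversal k T"
    unfolding is_transversal_def Let_def n_def[symmetric]
  proof (intro conjI allI impI)
    show "T \<subseteq> entries k" unfolding T_def f_def entries_def n_def[symmetric] using cl by auto
    show "finite T" unfolding T_def by simp
    show "card T = n" unfolding T_def using card_image[OF fi] by simp
  next
    fix r assume r: "r < n"
    show "\<exists>!e. e \<in> T \<and> fst e = r"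
    proof (rule ex1I[of _ "f r"])
      have "f r \<in> T" using r unfolding T_def by simp
      then show "f r \<in> T \<and> fst (f r) = r" unfolding f_def by simp
    next
      fix e assume "e \<in> T \<and> fst e = r" then show "e = f r" unfolding T_def f_def by auto
    qed
  next
    fix c assume c: "c < n"
    obtain a where a: "a < n" "col k a = c" using cs c by blast
    show "\<exists>!e. e \<in> T \<and> fst (snd e) = c"
    proof (rule ex1I[of _ "f a"])
      have "f a \<in> T" using a(1) unfolding T_def by simp
      moreover have "fst (snd (f a)) = c" using a(2) unfolding f_def by simp
      ultimately show "f a \<in> T \<and> fst (snd (f a)) = c" by blast
    next
      fix e assume e: "e \<in> T \<and> fst (snd e) = c"
      then obtain b where b: "b < n" "e = f b" unfolding T_def by auto
      then have "col k b = col k a" using e a unfolding f_def by simp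
      then have "b = a" by (rule inj_onD[OF ic]) (use a b in auto)
      then show "e = f a" using b by simp
    qed
  next
    fix s assume s: "s < n"
    obtain a where a: "a < n" "V k a (col k a) = s" using vs s by blast
    show "\<exists>!e. e \<in> T \<and> snd (snd e) = s"
    proof (rule ex1I[of _ "f a"])
      have "f a \<in> T" using a(1) unfolding T_def by simp
      moreover have "snd (snd (f a)) = s" using a(2) unfolding f_def by simp
      ultimately show "f a \<in> T \<and> snd (snd (f a)) = s" by blast
    next
      fix e assume e: "e \<in> T \<and> snd (snd e) = s"
      then obtain b where b: "b < n" "e = f b" unfolding T_def by auto
      then have "V k b (col k b) = V k a (col k a)" using e a unfolding f_def by simp
      then have "b = a" by (rule inj_onD[OF iv]) (use a b in auto)
      then show "e = f a" using b by simp
    qed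
  qed
  then show ?thesis by blast
qed

theorem lemma9:
  fixes k :: nat
  assumes "k \<ge> 1"
  shows "(\<exists>T. is_transversal k T) \<and>
    (\<forall>D. is_suitable_diagonal k D \<longrightarrow>
       (1, 0, 3) \<in> D \<and>
       (\<forall>j\<in>{1..k-1}. (3*j+2, (6*k+4) - 6*j, ((6*k+4) - 3*j + 3) mod (6*k+4)) \<in> D))"
  using trans_ex[OF assms] diag[OF assms] by blast

end
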